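(* Let ${}^{+}Q^H_k(x)$ be the coefficient polynomials of the linear transformation $x^n\mapsto H_n(x)$ and ${}^{-}Q^H_k(x)$ the coefficient polynomials of the linear transformation $x^n\mapsto H_n(-x)$ on $\mathbb{R}[x]$. Then for all $k\ge0$, ${}^{-}Q^H_k(x)={}^{+}Q^H_k(-3x)$.
   Context: $H_n$ denotes the $n$th physicist Hermite polynomial, $H_n(x)=n!\sum_{m=0}^{\lfloor n/2\rfloor}\frac{(-1)^m}{m!(n-2m)!}(2x)^{n-2m}$. Every linear operator $T\colon\mathbb{C}[x]\to\mathbb{C}[x]$ has a unique representation $T=\sum_{k=0}^\infty \frac{Q_k(x)}{k!}D^k$ with $D=d/dx$ and polynomials $Q_k(x)$, called the coefficient polynomials of $T$. *)

theory Defs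
  imports "HOL-Computational_Algebra.Polynomial"
begin

definition hermite :: "nat \<Rightarrow> real poly" where
  "hermite n = (\<Sum>m\<le>n div 2.
      monom (fact n * (-1) ^ m * 2 ^ (n - 2 * m) / (fact m * fact (n - 2 * m))) (n - 2 * m))"

definition hermite_plus :: "real poly \<Rightarrow> real poly" where
  "hermite_plus p = (\<Sum>i\<le>degree p. smult (coeff p i) (hermite i))"

definition hermite_minus :: "real poly \<Rightarrow> real poly" where
  "hermite_minus p = (\<Sum>i\<le>degree p. smult (coeff p i) (pcompose (hermite i) [:0, -1:]))"

definition is_coeff_polys :: "(real poly \<Rightarrow> real poly) \<Rightarrow> (nat \<Rightarrow> real poly) \<Rightarrow> bool" where
  "is_coeff_polys T Q \<longleftrightarrow>
     (\<forall>p. T p = (\<Sum>k\<le>degree p. smult (1 / fact k) (Q k * (pderiv ^^ k) p)))"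

definition coeff_polys :: "(real poly \<Rightarrow> real poly) \<Rightarrow> nat \<Rightarrow> real poly" where
  "coeff_polys T = (THE Q. is_coeff_polys T Q)"

end

theory Submission
  imports Defs
begin

lemma hp_monom:
  "j \<le> n \<Longrightarrow> (pderiv ^^ j) (monom (c::real) n) = monom (c * fact n / fact (n - j)) (n - j)"
proof (induction j)
  case 0
  then show ?case by simp
next
  case (Suc j)
  then have IH: "(pderiv ^^ j) (monom c n) = monom (c * fact n / fact (n - j)) (n - j)" by simp
  have e: "n - j = Suc (n - Suc j)" using Suc.prems by simp
  have f: "fact (n - j) = real (n - j) * fact (n - Suc j)"
    by (simp add: e)
  have "(pderiv ^^ Suc j) (monom c n) = pderiv (monom (c * fact n / fact (n - j)) (n - j))"
    using IH by simp
  also have "\<dots> = monom (real (n - j) * (c * fact n / fact (n - j))) (n - j - 1)"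
    by (simp add: pderiv_monom)
  also have "real (n - j) * (c * fact n / fact (n - j)) = c * fact n / fact (n - Suc j)"
    using Suc.prems by (simp add: f field_simps)
  also have "n - j - 1 = n - Suc j" by simp
  finally show ?case .
qed

lemma hp_zero_iter: "(pderiv ^^ m) (0::real poly) = 0"
  by (induction m) (simp_all add: pderiv_0)

lemma hp_monom0:
  assumes "n < j" shows "(pderiv ^^ j) (monom (c::real) n) = 0"
proof -
  define m where "m = j - Suc n"
  have j: "j = m + Suc n" using assms unfolding m_def by simp
  have "(pderiv ^^ Suc n) (monom c n) = pderiv ((pderiv ^^ n) (monom c n))" by simp
  also have "\<dots> = 0" by (simp add: hp_monom pderiv_monom)
  finally have "(pderiv ^^ Suc n) (monom c n) = 0" .
  then show ?thesis unfolding j funpow_add o_def by (simp add: hp_zero_iter)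
qed

lemma hp_smult: "(pderiv ^^ k) (smult c p) = smult c ((pderiv ^^ k) (p::real poly))"
  by (induct k) (simp_all add: pderiv_smult)

lemma smult_sum_r: "smult c (sum f A) = (\<Sum>x\<in>A. smult c (f x :: real poly))"
  by (induction A rule: infinite_finite_induct) (simp_all add: smult_add_right)

lemma smult_swap: "smult a (smult b X) = smult b (smult a (X::real poly))"
  by (simp only: smult_smult mult.commute)

lemma coeff_polys_unique:
  assumes A: "is_coeff_polys T Q1" and B: "is_coeff_polys T Q2"
  shows "Q1 = Q2"
proof
  fix k show "Q1 k = Q2 k"
  proof (induction k rule: less_induct)
    case (less k)
    let ?p = "monom (1::real) k"
    have dp: "degree ?p = k" by (simp add: degree_monom_eq)
    have split: "{..k} = insert k {..<k}" by auto
    have D: "(pderiv ^^ k) ?p = smult (fact k) 1"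
      using hp_monom[of k k 1] by (simp add: monom_0)
    have top: "\<And>Q. smult (1 / fact k) (Q * (pderiv ^^ k) ?p) = Q"
      unfolding D mult_smult_right smult_smult by simp
    have "T ?p = (\<Sum>j\<le>degree ?p. smult (1 / fact j) (Q1 j * (pderiv ^^ j) ?p))"
      using A unfolding is_coeff_polys_def by (rule spec)
    also have "\<dots> = Q1 k + (\<Sum>j<k. smult (1 / fact j) (Q1 j * (pderiv ^^ j) ?p))"
      unfolding dp split by (simp add: top)
    finally have 1: "T ?p = Q1 k + (\<Sum>j<k. smult (1 / fact j) (Q1 j * (pderiv ^^ j) ?p))" .
    have "T ?p = (\<Sum>j\<le>degree ?p. smult (1 / fact j) (Q2 j * (pderiv ^^ j) ?p))"
      using B unfolding is_coeff_polys_def by (rule spec)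
    also have "\<dots> = Q2 k + (\<Sum>j<k. smult (1 / fact j) (Q2 j * (pderiv ^^ j) ?p))"
      unfolding dp split by (simp add: top)
    finally have 2: "T ?p = Q2 k + (\<Sum>j<k. smult (1 / fact j) (Q2 j * (pderiv ^^ j) ?p))" .
    have "(\<Sum>j<k. smult (1 / fact j) (Q1 j * (pderiv ^^ j) ?p))
        = (\<Sum>j<k. smult (1 / fact j) (Q2 j * (pderiv ^^ j) ?p))"
      using less by (intro sum.cong) auto
    then show ?case using 1 2 by simp
  qed
qed

lemma is_coeff_polysI:
  assumes T: "\<And>p. T p = (\<Sum>i\<le>degree p. smult (coeff p i) (F i))"
    and F: "\<And>i. F i = (\<Sum>k\<le>i. smult (1 / fact k) (Q k * (pderiv ^^ k) (monom 1 i)))"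
  shows "is_coeff_polys T Q"
  unfolding is_coeff_polys_def
proof
  fix p :: "real poly"
  define d where "d = degree p"
  have "(\<Sum>k\<le>d. smult (1 / fact k) (Q k * (pderiv ^^ k) p))
      = (\<Sum>k\<le>d. smult (1 / fact k) (Q k * (pderiv ^^ k) (\<Sum>i\<le>d. monom (coeff p i) i)))"
    unfolding d_def poly_as_sum_of_monoms ..
  also have "\<dots> = (\<Sum>k\<le>d. \<Sum>i\<le>d. smult (coeff p i) (smult (1 / fact k) (Q k * (pderiv ^^ k) (monom 1 i))))"
  proof -
    have m: "\<And>i. monom (coeff p i) i = smult (coeff p i) (monom 1 i)" by (simp add: smult_monom)
    show ?thesis
      unfolding m higher_pderiv_sum hp_smult sum_distrib_left smult_sum_r mult_smult_right
      by (intro sum.cong refl) (rule smult_swap)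
  qed
  also have "\<dots> = (\<Sum>i\<le>d. smult (coeff p i) (\<Sum>k\<le>d. smult (1 / fact k) (Q k * (pderiv ^^ k) (monom 1 i))))"
    by (subst sum.swap) (simp only: smult_sum_r)
  also have "\<dots> = (\<Sum>i\<le>d. smult (coeff p i) (F i))"
  proof (rule sum.cong[OF refl])
    fix i assume i: "i \<in> {..d}"
    have "(\<Sum>k\<le>d. smult (1 / fact k) (Q k * (pderiv ^^ k) (monom 1 i)))
        = (\<Sum>k\<le>i. smult (1 / fact k) (Q k * (pderiv ^^ k) (monom 1 i)))"
      using i by (intro sum.mono_neutral_right) (auto simp: hp_monom0)
    then show "smult (coeff p i) (\<Sum>k\<le>d. smult (1 / fact k) (Q k * (pderiv ^^ k) (monom 1 i)))
        = smult (coeff p i) (F i)" unfolding F[of i] by (rule arg_cong)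
  qed
  finally have c: "(\<Sum>k\<le>d. smult (1 / fact k) (Q k * (pderiv ^^ k) p)) = (\<Sum>i\<le>d. smult (coeff p i) (F i))" .
  show "T p = (\<Sum>k\<le>degree p. smult (1 / fact k) (Q k * (pderiv ^^ k) p))"
    unfolding T[of p] using c[symmetric] unfolding d_def .
qed

lemma herm_eval:
  "poly (hermite n) y = (\<Sum>m\<le>n div 2. fact n * (-1) ^ m * 2 ^ (n - 2 * m) / (fact m * fact (n - 2 * m)) * y ^ (n - 2 * m))"
  by (simp add: hermite_def poly_sum poly_monom)

lemma appell:
  fixes a x :: real
  shows "(\<Sum>k\<le>n. of_nat (n choose k) * poly (hermite k) (a * x / 2) * x ^ (n - k))
       = poly (hermite n) ((a + 1) * x / 2)"
proof -
  define c where "c k m = (fact k * (-1) ^ m * 2 ^ (k - 2 * m) / (fact m * fact (k - 2 * m)) :: real)" for k m :: nat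
  define f where "f k m = of_nat (n choose k) * (c k m * (a * x / 2) ^ (k - 2 * m)) * x ^ (n - k)" for k m
  have "(\<Sum>k\<le>n. of_nat (n choose k) * poly (hermite k) (a * x / 2) * x ^ (n - k))
      = (\<Sum>k\<le>n. \<Sum>m\<le>k div 2. f k m)"
    unfolding herm_eval f_def c_def by (simp add: sum_distrib_left sum_distrib_right)
  also have "\<dots> = (\<Sum>k\<le>n. \<Sum>m\<le>n div 2. if 2 * m \<le> k then f k m else 0)"
  proof (rule sum.cong[OF refl])
    fix k assume k: "k \<in> {..n}"
    have "{m \<in> {..n div 2}. 2 * m \<le> k} = {..k div 2}" using k by auto
    then show "(\<Sum>m\<le>k div 2. f k m) = (\<Sum>m\<le>n div 2. if 2 * m \<le> k then f k m else 0)"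
      by (simp add: sum.inter_filter[symmetric])
  qed
  also have "\<dots> = (\<Sum>m\<le>n div 2. \<Sum>k\<le>n. if 2 * m \<le> k then f k m else 0)"
    by (rule sum.swap)
  also have "\<dots> = (\<Sum>m\<le>n div 2. c n m * ((a + 1) * x / 2) ^ (n - 2 * m))"
  proof (rule sum.cong[OF refl])
    fix m assume m: "m \<in> {..n div 2}"
    define N where "N = n - 2 * m"
    have mn: "2 * m \<le> n" using m by auto
    have "{k \<in> {..n}. 2 * m \<le> k} = {2 * m..n}" by auto
    then have "(\<Sum>k\<le>n. if 2 * m \<le> k then f k m else 0) = (\<Sum>k\<in>{2 * m..n}. f k m)"
      by (simp add: sum.inter_filter[symmetric])
    also have "\<dots> = (\<Sum>j\<le>N. f (2 * m + j) m)"
      by (rule sum.reindex_bij_witness[where i = "\<lambda>j. 2 * m + j" and j = "\<lambda>k. k - 2 * m"])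
        (use mn in \<open>auto simp: N_def\<close>)
    also have "\<dots> = (\<Sum>j\<le>N. (fact n * (-1) ^ m / (fact m * fact N)) *
                       (of_nat (N choose j) * (a * x) ^ j * x ^ (N - j)))"
    proof (rule sum.cong[OF refl])
      fix j assume j: "j \<in> {..N}"
      have jN: "j \<le> N" using j by simp
      have e1: "2 * m + j - 2 * m = j" by simp
      have e2: "n - (2 * m + j) = N - j" unfolding N_def by simp
      have b1: "(of_nat (n choose (2 * m + j)) :: real) = fact n / (fact (2 * m + j) * fact (N - j))"
        using jN mn by (subst binomial_fact) (auto simp: N_def e2[symmetric])
      have b2: "(of_nat (N choose j) :: real) = fact N / (fact j * fact (N - j))"
        using jN by (rule binomial_fact)
      show "f (2 * m + j) m = (fact n * (-1) ^ m / (fact m * fact N)) *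
                       (of_nat (N choose j) * (a * x) ^ j * x ^ (N - j))"
        unfolding f_def c_def e1 e2 b1 b2 by (simp add: power_divide power_mult_distrib field_simps)
    qed
    also have "\<dots> = (fact n * (-1) ^ m / (fact m * fact N)) * (a * x + x) ^ N"
      by (simp add: binomial_ring sum_distrib_left)
    also have "\<dots> = c n m * ((a + 1) * x / 2) ^ (n - 2 * m)"
      unfolding c_def N_def[symmetric] by (simp add: power_divide power_mult_distrib field_simps)
    finally show "(\<Sum>k\<le>n. if 2 * m \<le> k then f k m else 0) = c n m * ((a + 1) * x / 2) ^ (n - 2 * m)" .
  qed
  also have "\<dots> = poly (hermite n) ((a + 1) * x / 2)"
    unfolding herm_eval c_def by simp
  finally show ?thesis .
qed

lemma Qlemma:
  fixes a :: real
  shows "(\<Sum>k\<le>i. smult (1 / fact k) ((hermite k \<circ>\<^sub>p [:0, a / 2:]) * (pderiv ^^ k) (monom 1 i)))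
       = hermite i \<circ>\<^sub>p [:0, (a + 1) / 2:]"
proof -
  have "poly (\<Sum>k\<le>i. smult (1 / fact k) ((hermite k \<circ>\<^sub>p [:0, a / 2:]) * (pderiv ^^ k) (monom 1 i))) x
      = poly (hermite i \<circ>\<^sub>p [:0, (a + 1) / 2:]) x" for x
  proof -
    have "poly (\<Sum>k\<le>i. smult (1 / fact k) ((hermite k \<circ>\<^sub>p [:0, a / 2:]) * (pderiv ^^ k) (monom 1 i))) x
        = (\<Sum>k\<le>i. of_nat (i choose k) * poly (hermite k) (a * x / 2) * x ^ (i - k))"
      unfolding poly_sum
    proof (rule sum.cong[OF refl])
      fix k assume k: "k \<in> {..i}"
      then have ki: "k \<le> i" by simp
      have b: "(of_nat (i choose k) :: real) = fact i / (fact k * fact (i - k))"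
        using ki by (rule binomial_fact)
      show "poly (smult (1 / fact k) ((hermite k \<circ>\<^sub>p [:0, a / 2:]) * (pderiv ^^ k) (monom 1 i))) x
          = of_nat (i choose k) * poly (hermite k) (a * x / 2) * x ^ (i - k)"
        unfolding hp_monom[OF ki] b by (simp add: poly_pcompose poly_monom field_simps)
    qed
    also have "\<dots> = poly (hermite i) ((a + 1) * x / 2)" by (rule appell)
    also have "\<dots> = poly (hermite i \<circ>\<^sub>p [:0, (a + 1) / 2:]) x"
      by (simp add: poly_pcompose field_simps)
    finally show ?thesis .
  qed
  then show ?thesis using poly_eq_poly_eq_iff by blast
qed

lemma plus_Q: "is_coeff_polys hermite_plus (\<lambda>k. hermite k \<circ>\<^sub>p [:0, 1 / 2:])"
proof (rule is_coeff_polysI[where F = hermite])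
  show "hermite_plus p = (\<Sum>i\<le>degree p. smult (coeff p i) (hermite i))" for p
    by (simp add: hermite_plus_def)
  show "hermite i = (\<Sum>k\<le>i. smult (1 / fact k) ((hermite k \<circ>\<^sub>p [:0, 1 / 2:]) * (pderiv ^^ k) (monom 1 i)))" for i
    using Qlemma[where a=1 and i=i] by (simp add: pcompose_idR)
qed

lemma minus_Q: "is_coeff_polys hermite_minus (\<lambda>k. hermite k \<circ>\<^sub>p [:0, - 3 / 2:])"
proof (rule is_coeff_polysI[where F = "\<lambda>i. hermite i \<circ>\<^sub>p [:0, -1:]"])
  show "hermite_minus p = (\<Sum>i\<le>degree p. smult (coeff p i) (hermite i \<circ>\<^sub>p [:0, -1:]))" for p
    by (simp add: hermite_minus_def)
  show "hermite i \<circ>\<^sub>p [:0, -1:] = (\<Sum>k\<le>i. smult (1 / fact k) ((hermite k \<circ>\<^sub>p [:0, - 3 / 2:]) * (pderiv ^^ k) (monom 1 i)))" for i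
    using Qlemma[where a="-3" and i=i] by simp
qed

lemma coeff_polys_eq: "is_coeff_polys T Q \<Longrightarrow> coeff_polys T = Q"
  unfolding coeff_polys_def by (rule the_equality) (auto intro: coeff_polys_unique)

theorem corollary4p2:
  fixes k :: nat
  shows "coeff_polys hermite_minus k = pcompose (coeff_polys hermite_plus k) [:0, -3:]"
proof -
  have "poly (hermite k \<circ>\<^sub>p [:0, - 3 / 2:]) x = poly ((hermite k \<circ>\<^sub>p [:0, 1 / 2:]) \<circ>\<^sub>p [:0, -3:]) x" for x
    by (simp add: poly_pcompose)
  then have "hermite k \<circ>\<^sub>p [:0, - 3 / 2:] = (hermite k \<circ>\<^sub>p [:0, 1 / 2:]) \<circ>\<^sub>p [:0, -3:]"
    using poly_eq_poly_eq_iff by blast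
  then show ?thesis
    using coeff_polys_eq[OF plus_Q] coeff_polys_eq[OF minus_Q] by simp
qed

end
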